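(* Let $G$ be a disjoint union of finitely many star graphs $S_{n_1},\dots,S_{n_r}$ ($r\ge 1$, each $n_i\ge 1$). Under optimal play, the result of the Sign Game on $G$ is: (1) a draw if every $n_i$ is even; (2) a win for Player 2 if at least one $n_i$ is odd and the number of indices $i$ with $n_i$ even is even; (3) a win for Player 1 if at least one $n_i$ is odd and the number of indices $i$ with $n_i$ even is odd.
   Context: The Sign Game on a finite simple undirected graph $G$: two players, Player P and Player N, alternate turns; the player who moves first is called Player 1 and the other Player 2 (either of P, N may be Player 1). On a turn, a player chooses a vertex of $G$ not yet assigned a value and assigns it $+1$ or $-1$. The game ends when every vertex has been assigned. The score of an edge $uv$ is the product of the values of $u$ and $v$, and the score $s(G)$ of the game is the sum of the scores of all edges. Player P wins if $s(G)>0$, Player N wins if $s(G)<0$, and the game is a draw if $s(G)=0$. "Under optimal play" means both players play optimally, each with primary goal of winning and secondary goal of at least drawing; the result is the outcome of this finite perfect-information game under such play. The star graph $S_n$ has $n+1$ vertices: one central vertex adjacent to each of $n$ leaves, with no other edges. *)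

theory Defs
  imports Main
begin

text \<open>A graph is given by a finite vertex set V and a set Ed of edges, each edge
being a 2-element subset of V. A (partial) position of the Sign Game is a map
a :: 'a \<Rightarrow> int with a v \<in> {1,-1} for assigned vertices and a v = 0 for
unassigned ones.\<close>

definition sg_score :: "'a set set \<Rightarrow> ('a \<Rightarrow> int) \<Rightarrow> int" where
  "sg_score Ed a = (\<Sum>e\<in>Ed. \<Prod>v\<in>e. a v)"

definition sg_unassigned :: "'a set \<Rightarrow> ('a \<Rightarrow> int) \<Rightarrow> 'a set" where
  "sg_unassigned V a = {v\<in>V. a v = 0}"

text \<open>Value of the game under optimal play, encoded as +1 (P wins), 0 (draw),
-1 (N wins). P maximises, N minimises this outcome (primary goal win,
secondary goal draw). The boolean says whether it is P's turn; the nat is fuel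
(number of remaining moves).\<close>

fun sg_val :: "'a set \<Rightarrow> 'a set set \<Rightarrow> nat \<Rightarrow> bool \<Rightarrow> ('a \<Rightarrow> int) \<Rightarrow> int" where
  "sg_val V Ed 0 pturn a = sgn (sg_score Ed a)"
| "sg_val V Ed (Suc k) pturn a =
     (if sg_unassigned V a = {} then sgn (sg_score Ed a)
      else (if pturn then Max else Min)
        {sg_val V Ed k (\<not> pturn) (a(v := s)) | v s. v \<in> sg_unassigned V a \<and> s \<in> {1, -1}})"

text \<open>Outcome of the Sign Game on (V, Ed) under optimal play, where P_first says
whether Player P is Player 1.\<close>

definition sign_game_result :: "'a set \<Rightarrow> 'a set set \<Rightarrow> bool \<Rightarrow> int" where
  "sign_game_result V Ed P_first = sg_val V Ed (card V) P_first (\<lambda>_. 0)"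

text \<open>Disjoint union of stars S_{ns!0}, ..., S_{ns!(r-1)}: vertex (i,0) is the
centre of star i, vertices (i,j) with 1 \<le> j \<le> ns!i are its leaves.\<close>

definition stars_V :: "nat list \<Rightarrow> (nat \<times> nat) set" where
  "stars_V ns = {(i, j). i < length ns \<and> j \<le> ns ! i}"

definition stars_E :: "nat list \<Rightarrow> (nat \<times> nat) set set" where
  "stars_E ns = {{(i, 0), (i, j)} | i j. i < length ns \<and> 1 \<le> j \<and> j \<le> ns ! i}"

end

theory Submission
  imports Defs
begin


lemma move_set_eq:
  "{sg_val V Ed k p (a(v := s)) | v s. v \<in> U \<and> s \<in> {1, -1}} =
   (\<lambda>(v,s). sg_val V Ed k p (a(v:=s))) ` (U \<times> {1,-1})"
  by auto

lemma unassigned_upd: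
  assumes "v \<in> sg_unassigned V a" "s \<noteq> 0"
  shows "sg_unassigned V (a(v:=s)) = sg_unassigned V a - {v}"
  using assms by (auto simp: sg_unassigned_def)

lemma sg_val_bounds:
  assumes "finite V"
  shows "-1 \<le> sg_val V Ed k p a \<and> sg_val V Ed k p a \<le> 1"
proof (induction k arbitrary: p a)
  case 0
  then show ?case by (simp add: sgn_if)
next
  case (Suc k)
  show ?case
  proof (cases "sg_unassigned V a = {}")
    case True
    then show ?thesis by (simp add: sgn_if)
  next
    case False
    define S where "S = (\<lambda>(v,s). sg_val V Ed k (\<not>p) (a(v:=s))) ` (sg_unassigned V a \<times> {1::int,-1})"
    have finU: "finite (sg_unassigned V a)" using assms by (simp add: sg_unassigned_def)
    have fS: "finite S" "S \<noteq> {}" using finU False by (auto simp: S_def)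
    have bS: "\<And>e. e \<in> S \<Longrightarrow> -1 \<le> e \<and> e \<le> 1" using Suc.IH by (auto simp: S_def)
    have eq: "sg_val V Ed (Suc k) p a = (if p then Max S else Min S)"
      unfolding sg_val.simps(2) move_set_eq S_def using False by simp
    show ?thesis using bS[OF Max_in[OF fS]] bS[OF Min_in[OF fS]] eq by auto
  qed
qed

lemma strategy:
  fixes \<sigma> x :: int
  assumes fin: "finite V" and sig: "\<sigma> = 1 \<or> \<sigma> = -1"
  and stepR: "\<And>a. IR a \<Longrightarrow> sg_unassigned V a \<noteq> {} \<Longrightarrow> \<exists>v\<in>sg_unassigned V a. \<exists>s\<in>{1,-1}. IO (a(v:=s))"
  and stepO: "\<And>a v s. IO a \<Longrightarrow> v \<in> sg_unassigned V a \<Longrightarrow> s \<in> {1,-1} \<Longrightarrow> IR (a(v:=s))"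
  and endR: "\<And>a. IR a \<Longrightarrow> sg_unassigned V a = {} \<Longrightarrow> x \<le> \<sigma> * sgn (sg_score Ed a)"
  and endO: "\<And>a. IO a \<Longrightarrow> sg_unassigned V a = {} \<Longrightarrow> x \<le> \<sigma> * sgn (sg_score Ed a)"
  shows "card (sg_unassigned V a) \<le> k \<Longrightarrow> (IR a \<longrightarrow> x \<le> \<sigma> * sg_val V Ed k (\<sigma> = 1) a) \<and> (IO a \<longrightarrow> x \<le> \<sigma> * sg_val V Ed k (\<sigma> \<noteq> 1) a)"
proof (induction k arbitrary: a)
  case 0
  have finU: "finite (sg_unassigned V a)" using fin by (simp add: sg_unassigned_def)
  then have "sg_unassigned V a = {}" using 0 by simp
  then show ?case using endR endO by simp
next
  case (Suc k)
  have finU: "finite (sg_unassigned V a)" using fin by (simp add: sg_unassigned_def)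
  show ?case
  proof (cases "sg_unassigned V a = {}")
    case True
    then show ?thesis using endR endO by simp
  next
    case False
    define S where "S p = (\<lambda>(v,s). sg_val V Ed k p (a(v:=s))) ` (sg_unassigned V a \<times> {1::int,-1})" for p
    have fS: "finite (S p)" "S p \<noteq> {}" for p using finU False by (auto simp: S_def)
    have eq: "sg_val V Ed (Suc k) p a = (if p then Max (S (\<not>p)) else Min (S (\<not>p)))" for p
      unfolding sg_val.simps(2) move_set_eq S_def using False by simp
    have cardU: "card (sg_unassigned V (a(v:=s))) \<le> k" if "v \<in> sg_unassigned V a" "s \<in> {1,-1}" for v s
      using that Suc.prems finU by (auto simp: unassigned_upd card_Diff_singleton)
    have R: "x \<le> \<sigma> * sg_val V Ed (Suc k) (\<sigma> = 1) a" if hR: "IR a"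
    proof -
      obtain v s where vs: "v \<in> sg_unassigned V a" "s \<in> {1,-1}" "IO (a(v:=s))"
        using stepR[OF hR False] by blast
      have "x \<le> \<sigma> * sg_val V Ed k (\<sigma> \<noteq> 1) (a(v:=s))"
        using Suc.IH[OF cardU[OF vs(1,2)]] vs(3) by blast
      moreover have "sg_val V Ed k (\<sigma> \<noteq> 1) (a(v:=s)) \<in> S (\<sigma> \<noteq> 1)"
        using vs(1,2) unfolding S_def by force
      ultimately show ?thesis
        using sig eq[of "\<sigma> = 1"] Max_ge[OF fS(1)] Min_le[OF fS(1)]
        by (cases "\<sigma> = 1") force+
    qed
    have O: "x \<le> \<sigma> * sg_val V Ed (Suc k) (\<sigma> \<noteq> 1) a" if "IO a"
    proof -
      have all: "x \<le> \<sigma> * e" if "e \<in> S (\<sigma> = 1)" for e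
      proof -
        obtain v s where vs: "v \<in> sg_unassigned V a" "s \<in> {1,-1}" "e = sg_val V Ed k (\<sigma> = 1) (a(v:=s))"
          using \<open>e \<in> S (\<sigma> = 1)\<close> unfolding S_def by auto
        show ?thesis using Suc.IH[OF cardU[OF vs(1,2)]] stepO[OF \<open>IO a\<close> vs(1,2)] vs(3) by blast
      qed
      show ?thesis
        using sig eq[of "\<sigma> \<noteq> 1"] all[OF Max_in[OF fS]] all[OF Min_in[OF fS]]
        by (cases "\<sigma> = 1") auto
    qed
    show ?thesis using R O by blast
  qed
qed



lemma stars_V_eq: "stars_V ns = Sigma {..<length ns} (\<lambda>i. {..ns!i})"
  by (auto simp: stars_V_def)

lemma finite_stars_V: "finite (stars_V ns)"
  by (simp add: stars_V_eq)

lemma mem_stars_V[simp]: "(i,j) \<in> stars_V ns \<longleftrightarrow> i < length ns \<and> j \<le> ns!i"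
  by (simp add: stars_V_def)

lemma score_eq:
  "sg_score (stars_E ns) a = (\<Sum>i<length ns. a(i,0) * (\<Sum>j=1..ns!i. a(i,j)))"
proof -
  define D where "D = Sigma {..<length ns} (\<lambda>i. {1..ns!i})"
  have E: "stars_E ns = (\<lambda>(i,j). {(i,0),(i,j)}) ` D"
    unfolding stars_E_def D_def image_def by fastforce
  have inj: "inj_on (\<lambda>(i,j). {(i,0::nat),(i,j)}) D"
    by (auto simp: inj_on_def D_def doubleton_eq_iff)
  have "sg_score (stars_E ns) a = (\<Sum>(i,j)\<in>D. \<Prod>v\<in>{(i,0),(i,j)}. a v)"
    unfolding sg_score_def E by (subst sum.reindex[OF inj]) (simp add: case_prod_unfold o_def)
  also have "\<dots> = (\<Sum>(i,j)\<in>D. a(i,0) * a(i,j))"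
    by (rule sum.cong) (auto simp: D_def)
  also have "\<dots> = (\<Sum>i<length ns. \<Sum>j=1..ns!i. a(i,0) * a(i,j))"
    unfolding D_def by (rule sum.Sigma[symmetric]) auto
  also have "\<dots> = (\<Sum>i<length ns. a(i,0) * (\<Sum>j=1..ns!i. a(i,j)))"
    by (simp add: sum_distrib_left)
  finally show ?thesis .
qed

lemma leafsum_even: fixes k :: nat and x :: "nat \<Rightarrow> int" shows "(\<Sum>j=1..2*k. x j) = (\<Sum>m<k. x(2*m+1) + x(2*m+2) :: int)"
proof (induction k)
  case 0 then show ?case by simp
next
  case (Suc k)
  have "(\<Sum>j=1..2*Suc k. x j) = (\<Sum>j=1..2*k. x j) + x(2*k+1) + x(2*k+2)"
    by (simp add: sum.cl_ivl_Suc)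
  then show ?case using Suc by simp
qed

lemma leafsum: fixes n :: nat and x :: "nat \<Rightarrow> int" shows "(\<Sum>j=1..n. x j) = (\<Sum>m<n div 2. x(2*m+1) + x(2*m+2)) + (if odd n then x n else (0::int))"
proof (cases "even n")
  case True
  then obtain k where "n = 2*k" by blast
  then show ?thesis using leafsum_even[where k=k and x=x] by simp
next
  case False
  then obtain k where n: "n = 2*k+1" using oddE by blast
  have "(\<Sum>j=1..n. x j) = (\<Sum>j=1..2*k. x j) + x n" using n by (simp add: sum.cl_ivl_Suc)
  then show ?thesis using leafsum_even[where k=k and x=x] n by simp
qed



definition valid :: "(nat\<times>nat \<Rightarrow> int) \<Rightarrow> bool" where
  "valid a \<longleftrightarrow> (\<forall>v. a v \<in> {-1,0,1})"

definition pair_ok :: "bool \<Rightarrow> int \<Rightarrow> int \<Rightarrow> int \<Rightarrow> int \<Rightarrow> bool" where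
  "pair_ok h \<sigma> c p q \<longleftrightarrow> (p = 0 \<and> q = 0) \<or> (p \<noteq> 0 \<and> q \<noteq> 0 \<and> (c = 0 \<longrightarrow> p + q = 0) \<and> \<sigma>*c*(p+q) \<ge> 0)
     \<or> (h \<and> c \<noteq> 0 \<and> ((p = \<sigma>*c \<and> q = 0) \<or> (p = 0 \<and> q = \<sigma>*c)))"

definition pairs_ok :: "bool \<Rightarrow> nat list \<Rightarrow> int \<Rightarrow> (nat\<times>nat \<Rightarrow> int) \<Rightarrow> bool" where
  "pairs_ok h ns \<sigma> a \<longleftrightarrow> (\<forall>i<length ns. \<forall>m<ns!i div 2. pair_ok h \<sigma> (a(i,0)) (a(i,2*m+1)) (a(i,2*m+2)))"

definition spec_ok :: "nat list \<Rightarrow> int \<Rightarrow> (nat\<times>nat \<Rightarrow> int) \<Rightarrow> bool" where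
  "spec_ok ns \<sigma> a \<longleftrightarrow> (\<forall>i<length ns. odd (ns!i) \<longrightarrow>
     (a(i,0) = 0 \<and> a(i,ns!i) = 0) \<or> (a(i,0) \<noteq> 0 \<and> a(i,ns!i) = \<sigma>*a(i,0)))"

definition cset :: "nat list \<Rightarrow> (nat\<times>nat \<Rightarrow> int) \<Rightarrow> nat set" where
  "cset ns a = {i. i < length ns \<and> even (ns!i) \<and> a(i,0) = 0}"

lemma pair_term:
  assumes "pair_ok h \<sigma> c p q" "p \<noteq> 0" "q \<noteq> 0"
  shows "\<sigma>*c*(p+q) \<ge> 0"
  using assms by (auto simp: pair_ok_def)

lemma terminal:
  assumes v: "valid a" and sig: "\<sigma> = 1 \<or> \<sigma> = -1"
    and full: "sg_unassigned (stars_V ns) a = {}"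
    and P: "pairs_ok h ns \<sigma> a" and S: "spec_ok ns \<sigma> a"
  shows "\<sigma> * sg_score (stars_E ns) a \<ge> (\<Sum>i<length ns. if odd (ns!i) then 1 else 0)"
proof -
  have nz: "a(i,j) \<noteq> 0" if "i < length ns" "j \<le> ns!i" for i j
    using full that by (auto simp: sg_unassigned_def)
  have "\<sigma> * sg_score (stars_E ns) a = (\<Sum>i<length ns.
        (\<Sum>m<ns!i div 2. \<sigma>*a(i,0)*(a(i,2*m+1) + a(i,2*m+2))) + (if odd (ns!i) then \<sigma>*a(i,0)*a(i,ns!i) else 0))"
    unfolding score_eq leafsum
    by (auto simp: sum_distrib_left ring_distribs mult.assoc intro!: sum.cong)
  also have "\<dots> \<ge> (\<Sum>i<length ns. if odd (ns!i) then 1 else 0)"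
  proof (rule sum_mono)
    fix i assume i: "i \<in> {..<length ns}"
    have "(\<Sum>m<ns!i div 2. \<sigma>*a(i,0)*(a(i,2*m+1) + a(i,2*m+2))) \<ge> 0"
    proof (rule sum_nonneg)
      fix m assume m: "m \<in> {..<ns!i div 2}"
      have "pair_ok h \<sigma> (a(i,0)) (a(i,2*m+1)) (a(i,2*m+2))" using P i m by (simp add: pairs_ok_def)
      moreover have "a(i,2*m+1) \<noteq> 0" "a(i,2*m+2) \<noteq> 0" using nz i m by auto
      ultimately show "\<sigma>*a(i,0)*(a(i,2*m+1) + a(i,2*m+2)) \<ge> 0" by (rule pair_term)
    qed
    moreover have "odd (ns!i) \<Longrightarrow> \<sigma>*a(i,0)*a(i,ns!i) = 1"
    proof -
      assume o: "odd (ns!i)"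
      have "a(i,0) \<noteq> 0" using nz i by auto
      then have "a(i,ns!i) = \<sigma>*a(i,0)" using S i o by (auto simp: spec_ok_def)
      moreover have "a(i,0) \<in> {-1,0,1}" using v by (simp add: valid_def)
      ultimately show ?thesis using sig \<open>a(i,0) \<noteq> 0\<close> by auto
    qed
    ultimately show "(if odd (ns!i) then 1 else 0) \<le>
        (\<Sum>m<ns!i div 2. \<sigma>*a(i,0)*(a(i,2*m+1) + a(i,2*m+2))) + (if odd (ns!i) then \<sigma>*a(i,0)*a(i,ns!i) else 0)"
      by auto
  qed
  finally show ?thesis .
qed

lemma terminal_sgn:
  assumes "valid a" "\<sigma> = 1 \<or> \<sigma> = -1" "sg_unassigned (stars_V ns) a = {}"
    "pairs_ok h ns \<sigma> a" "spec_ok ns \<sigma> a"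
  shows "0 \<le> \<sigma> * sgn (sg_score (stars_E ns) a)"
    and "(\<exists>i<length ns. odd (ns!i)) \<Longrightarrow> 1 \<le> \<sigma> * sgn (sg_score (stars_E ns) a)"
proof -
  have T: "\<sigma> * sg_score (stars_E ns) a \<ge> (\<Sum>i<length ns. if odd (ns!i) then 1 else 0)"
    using terminal[OF assms] .
  have g: "\<And>y::int. 0 \<le> y \<Longrightarrow> 0 \<le> sgn y" "\<And>y::int. 1 \<le> y \<Longrightarrow> 1 \<le> sgn y" by (auto simp: sgn_if)
  have s: "\<sigma> * sgn x = sgn (\<sigma> * x)" for x :: int using assms(2) by (auto simp: sgn_mult)
  have nn: "(\<Sum>i<length ns. if odd (ns!i) then 1 else 0) \<ge> (0::int)" by (rule sum_nonneg) auto
  show "0 \<le> \<sigma> * sgn (sg_score (stars_E ns) a)" unfolding s by (rule g(1)) (use T nn in linarith)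
  assume "\<exists>i<length ns. odd (ns!i)"
  then obtain i where i: "i < length ns" "odd (ns!i)" by blast
  have "(\<Sum>i<length ns. if odd (ns!i) then 1 else 0) \<ge> (if odd (ns!i) then 1 else (0::int))"
    by (rule member_le_sum) (use i in auto)
  note ml = this
  show "1 \<le> \<sigma> * sgn (sg_score (stars_E ns) a)" unfolding s by (rule g(2)) (use T i ml in auto)
qed



lemma valid_upd: "valid a \<Longrightarrow> s \<in> {-1,0,1} \<Longrightarrow> valid (a(v:=s))"
  by (auto simp: valid_def)

lemma leaf_cases:
  fixes j n :: nat
  assumes "1 \<le> j" "j \<le> n"
  shows "(\<exists>m<n div 2. j = 2*m+1 \<or> j = 2*m+2) \<or> (odd n \<and> j = n)"
proof -
  define m where "m = (j - 1) div 2"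
  have "j = 2*m+1 \<or> j = 2*m+2" using assms(1) unfolding m_def by presburger
  moreover have "m < n div 2 \<or> (odd n \<and> j = n)" using assms unfolding m_def by presburger
  ultimately show ?thesis by blast
qed

lemma pair_ok_c0: "pair_ok h \<sigma> 0 p q \<Longrightarrow> pair_ok h \<sigma> c p q"
  by (auto simp: pair_ok_def)

lemma pairs_frame:
  assumes "pairs_ok h ns \<sigma> a" "i < length ns" "m < ns!i div 2"
    "\<forall>v. v \<noteq> (i,2*m+1) \<and> v \<noteq> (i,2*m+2) \<longrightarrow> b v = a v"
    "pair_ok h \<sigma> (b(i,0)) (b(i,2*m+1)) (b(i,2*m+2))"
  shows "pairs_ok h ns \<sigma> b"
  unfolding pairs_ok_def
proof (intro allI impI)
  fix i' m' assume i': "i' < length ns" and m': "m' < ns!i' div 2"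
  show "pair_ok h \<sigma> (b(i',0)) (b(i',2*m'+1)) (b(i',2*m'+2))"
  proof (cases "i' = i \<and> m' = m")
    case True then show ?thesis using assms(5) by simp
  next
    case False
    have "b(i',0) = a(i',0)" "b(i',2*m'+1) = a(i',2*m'+1)" "b(i',2*m'+2) = a(i',2*m'+2)"
      using assms(4) False by (auto; presburger)+
    then show ?thesis using assms(1) i' m' by (simp add: pairs_ok_def)
  qed
qed

lemma pairs_center:
  assumes "pairs_ok h ns \<sigma> a" "a(i,0) = 0"
    "\<forall>i'<length ns. \<forall>m'<ns!i' div 2. b(i',2*m'+1) = a(i',2*m'+1) \<and> b(i',2*m'+2) = a(i',2*m'+2)"
    "\<forall>i'. i' \<noteq> i \<longrightarrow> b(i',0) = a(i',0)"
  shows "pairs_ok h ns \<sigma> b"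
  unfolding pairs_ok_def
proof (intro allI impI)
  fix i' m' assume i': "i' < length ns" and m': "m' < ns!i' div 2"
  have P: "pair_ok h \<sigma> (a(i',0)) (a(i',2*m'+1)) (a(i',2*m'+2))" using assms(1) i' m' by (simp add: pairs_ok_def)
  show "pair_ok h \<sigma> (b(i',0)) (b(i',2*m'+1)) (b(i',2*m'+2))"
  proof (cases "i' = i")
    case True then show ?thesis using P assms(2,3) i' m' pair_ok_c0 by auto
  next
    case False then show ?thesis using P assms(3,4) i' m' by auto
  qed
qed

lemma spec_frame:
  assumes "spec_ok ns \<sigma> a" "\<forall>i<length ns. odd (ns!i) \<longrightarrow> b(i,0) = a(i,0) \<and> b(i,ns!i) = a(i,ns!i)"
  shows "spec_ok ns \<sigma> b"
  using assms by (simp add: spec_ok_def)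

lemma spec_upd:
  assumes "spec_ok ns \<sigma> a" "\<forall>i'<length ns. odd (ns!i') \<and> i' \<noteq> i \<longrightarrow> b(i',0) = a(i',0) \<and> b(i',ns!i') = a(i',ns!i')"
    "b(i,0) \<noteq> 0" "b(i,ns!i) = \<sigma> * b(i,0)"
  shows "spec_ok ns \<sigma> b"
  using assms unfolding spec_ok_def by metis

lemma cset_frame:
  assumes "\<forall>i<length ns. even (ns!i) \<longrightarrow> b(i,0) = a(i,0)"
  shows "cset ns b = cset ns a"
  using assms by (auto simp: cset_def)

lemma finite_cset: "finite (cset ns a)"
  by (rule finite_subset[of _ "{..<length ns}"]) (auto simp: cset_def)

lemma cset_remove:
  assumes "i \<in> cset ns a" "b(i,0) \<noteq> 0" "\<forall>i'. i' \<noteq> i \<longrightarrow> b(i',0) = a(i',0)"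
  shows "card (cset ns b) = card (cset ns a) - 1"
proof -
  have "cset ns b = cset ns a - {i}" using assms by (auto simp: cset_def)
  then show ?thesis using assms(1) finite_cset by simp
qed



lemma po_resp1: "c \<in> {-1,0,1} \<Longrightarrow> s \<in> {1,-1} \<Longrightarrow> \<sigma> = 1 \<or> \<sigma> = -1 \<Longrightarrow>
   pair_ok h \<sigma> c s (if c = 0 then -s else \<sigma>*c) \<and> pair_ok h \<sigma> c (if c = 0 then -s else \<sigma>*c) s"
  unfolding pair_ok_def by auto

lemma po_half: "c \<in> {-1,1} \<Longrightarrow> s \<in> {1,-1} \<Longrightarrow> \<sigma> = 1 \<or> \<sigma> = -1 \<Longrightarrow>
   pair_ok h \<sigma> c s (\<sigma>*c) \<and> pair_ok h \<sigma> c (\<sigma>*c) s"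
  unfolding pair_ok_def by auto

lemma po_halfinv: "pair_ok True \<sigma> c 0 q \<Longrightarrow> q \<noteq> 0 \<Longrightarrow> c \<noteq> 0 \<and> q = \<sigma>*c"
  "pair_ok True \<sigma> c q 0 \<Longrightarrow> q \<noteq> 0 \<Longrightarrow> c \<noteq> 0 \<and> q = \<sigma>*c"
  unfolding pair_ok_def by auto

lemma po_zero: "pair_ok False \<sigma> c 0 q \<Longrightarrow> q = 0" "pair_ok False \<sigma> c q 0 \<Longrightarrow> q = 0"
  unfolding pair_ok_def by auto

lemma po_free: "pair_ok True \<sigma> c 0 q \<Longrightarrow> c \<in> {-1,1} \<Longrightarrow> \<sigma> = 1 \<or> \<sigma> = -1 \<Longrightarrow>
   pair_ok True \<sigma> c (\<sigma>*c) q \<and> pair_ok True \<sigma> c q (\<sigma>*c)"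
  unfolding pair_ok_def by auto

lemma po_free2: "pair_ok True \<sigma> c q 0 \<Longrightarrow> c \<in> {-1,1} \<Longrightarrow> \<sigma> = 1 \<or> \<sigma> = -1 \<Longrightarrow>
   pair_ok True \<sigma> c q (\<sigma>*c)"
  unfolding pair_ok_def by auto



definition invA :: "nat list \<Rightarrow> int \<Rightarrow> (nat\<times>nat \<Rightarrow> int) \<Rightarrow> bool" where
  "invA ns \<sigma> a \<longleftrightarrow> valid a \<and> pairs_ok True ns \<sigma> a"

lemma A_center:
  assumes "invA ns \<sigma> a" "a(i,0) = 0" "s \<in> {1,-1}"
  shows "invA ns \<sigma> (a((i,0):=s))"
  using assms unfolding invA_def
  by (auto intro!: valid_upd pairs_center[where a=a and i=i])

lemma A_pair:
  assumes "invA ns \<sigma> a" "i < length ns" "m < ns!i div 2"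
    "\<forall>v. v \<noteq> (i,2*m+1) \<and> v \<noteq> (i,2*m+2) \<longrightarrow> b v = a v" "valid b"
    "pair_ok True \<sigma> (b(i,0)) (b(i,2*m+1)) (b(i,2*m+2))"
  shows "invA ns \<sigma> b"
  using assms pairs_frame[of True ns \<sigma> a i m b] unfolding invA_def by blast

lemma A_free:
  assumes inv: "invA ns \<sigma> a" and sig: "\<sigma> = 1 \<or> \<sigma> = -1" and ev: "\<forall>i<length ns. even (ns!i)"
    and ne: "sg_unassigned (stars_V ns) a \<noteq> {}"
  shows "\<exists>w\<in>sg_unassigned (stars_V ns) a. \<exists>t\<in>{1,-1}. invA ns \<sigma> (a(w:=t))"
proof -
  obtain i j where ij: "(i,j) \<in> sg_unassigned (stars_V ns) a" using ne by auto
  then have i: "i < length ns" and j: "j \<le> ns!i" and a0: "a(i,j) = 0" by (auto simp: sg_unassigned_def)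
  have c0: ?thesis if "a(i,0) = 0"
  proof -
    have "(i,0) \<in> sg_unassigned (stars_V ns) a" using i that by (simp add: sg_unassigned_def)
    then show ?thesis using A_center[OF inv that, of 1] by blast
  qed
  show ?thesis
  proof (cases "j = 0 \<or> a(i,0) = 0")
    case True then show ?thesis using c0 a0 by auto
  next
    case False
    then have j1: "1 \<le> j" and c: "a(i,0) \<noteq> 0" by auto
    have cv: "a(i,0) \<in> {-1,1}" using inv c unfolding invA_def valid_def by auto
    obtain m where m: "m < ns!i div 2" and jm: "j = 2*m+1 \<or> j = 2*m+2"
      using leaf_cases[OF j1 j] ev i by auto
    have P: "pair_ok True \<sigma> (a(i,0)) (a(i,2*m+1)) (a(i,2*m+2))"
      using inv i m by (simp add: invA_def pairs_ok_def)
    have vt: "\<sigma> * a(i,0) \<in> {1,-1}" using sig cv by auto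
    have "invA ns \<sigma> (a((i,j) := \<sigma> * a(i,0)))"
    proof (rule A_pair[OF inv i m])
      show "\<forall>v. v \<noteq> (i,2*m+1) \<and> v \<noteq> (i,2*m+2) \<longrightarrow> (a((i,j) := \<sigma> * a(i,0))) v = a v" using jm by auto
      show "valid (a((i,j) := \<sigma> * a(i,0)))" using inv vt by (auto simp: invA_def intro!: valid_upd)
      show "pair_ok True \<sigma> ((a((i,j) := \<sigma> * a(i,0))) (i,0)) ((a((i,j) := \<sigma> * a(i,0))) (i,2*m+1)) ((a((i,j) := \<sigma> * a(i,0))) (i,2*m+2))"
      proof (cases "j = 2*m+1")
        case True then show ?thesis using P a0 po_free[where \<sigma>=\<sigma> and c="a(i,0)" and q="a(i,2*m+2)"] cv sig by simp
      next
        case False then have "j = 2*m+2" using jm by simp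
        then show ?thesis using P a0 po_free2[where \<sigma>=\<sigma> and c="a(i,0)" and q="a(i,2*m+1)"] cv sig by simp
      qed
    qed
    then show ?thesis using ij vt by blast
  qed
qed

lemma A_resp:
  assumes inv: "invA ns \<sigma> a" and sig: "\<sigma> = 1 \<or> \<sigma> = -1" and ev: "\<forall>i<length ns. even (ns!i)"
    and v: "v \<in> sg_unassigned (stars_V ns) a" and s: "s \<in> {1,-1}"
  shows "invA ns \<sigma> (a(v:=s)) \<or> (\<exists>w t. w \<in> sg_unassigned (stars_V ns) (a(v:=s)) \<and> t \<in> {1,-1} \<and> invA ns \<sigma> (a(v:=s, w:=t)))"
proof -
  obtain i j where vij: "v = (i,j)" by fastforce
  have i: "i < length ns" and j: "j \<le> ns!i" and a0: "a(i,j) = 0" using v vij by (auto simp: sg_unassigned_def)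
  have val: "valid a" using inv by (simp add: invA_def)
  show ?thesis
  proof (cases "j = 0")
    case True then show ?thesis using A_center[OF inv _ s] a0 vij by auto
  next
    case False
    then have j1: "1 \<le> j" by auto
    obtain m where m: "m < ns!i div 2" and jm: "j = 2*m+1 \<or> j = 2*m+2"
      using leaf_cases[OF j1 j] ev i by auto
    have P: "pair_ok True \<sigma> (a(i,0)) (a(i,2*m+1)) (a(i,2*m+2))"
      using inv i m by (simp add: invA_def pairs_ok_def)
    define w where "w = (if j = 2*m+1 then (i,2*m+2) else (i,2*m+1))"
    have wV: "w \<in> stars_V ns" using i m by (auto simp: w_def)
    have cv: "a(i,0) \<in> {-1,0,1}" "a w \<in> {-1,0,1}" using val unfolding valid_def by blast+
    show ?thesis
    proof (cases "a w = 0")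
      case False
      have "invA ns \<sigma> (a(v:=s))"
      proof (rule A_pair[OF inv i m])
        show "\<forall>u. u \<noteq> (i,2*m+1) \<and> u \<noteq> (i,2*m+2) \<longrightarrow> (a(v:=s)) u = a u" using jm vij by auto
        show "valid (a(v:=s))" using val s by (auto intro!: valid_upd)
        show "pair_ok True \<sigma> ((a(v:=s)) (i,0)) ((a(v:=s)) (i,2*m+1)) ((a(v:=s)) (i,2*m+2))"
      proof (cases "j = 2*m+1")
        case True
        then have "a(i,0) \<noteq> 0 \<and> a(i,2*m+2) = \<sigma>*a(i,0)" using P a0 po_halfinv(1) \<open>a w \<noteq> 0\<close> by (simp add: w_def)
        then show ?thesis using True vij po_half[where \<sigma>=\<sigma> and c="a(i,0)" and s=s] cv sig s by simp
      next
        case F: False then have j2: "j = 2*m+2" using jm by simp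
        then have "a(i,0) \<noteq> 0 \<and> a(i,2*m+1) = \<sigma>*a(i,0)" using P a0 po_halfinv(2) \<open>a w \<noteq> 0\<close> F by (simp add: w_def)
        then show ?thesis using j2 vij po_half[where \<sigma>=\<sigma> and c="a(i,0)" and s=s] cv sig s by simp
      qed
      qed
      then show ?thesis by blast
    next
      case True
      define t where "t = (if a(i,0) = 0 then -s else \<sigma> * a(i,0))"
      have t: "t \<in> {1,-1}" using s cv sig by (auto simp: t_def)
      have wun: "w \<in> sg_unassigned (stars_V ns) (a(v:=s))" using True wV jm vij by (auto simp: sg_unassigned_def w_def)
      have "invA ns \<sigma> (a(v:=s, w:=t))"
      proof (rule A_pair[OF inv i m])
        show "\<forall>u. u \<noteq> (i,2*m+1) \<and> u \<noteq> (i,2*m+2) \<longrightarrow> (a(v:=s, w:=t)) u = a u" using jm vij by (auto simp: w_def)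
        show "valid (a(v:=s, w:=t))" using val s t by (auto intro!: valid_upd)
        show "pair_ok True \<sigma> ((a(v:=s, w:=t)) (i,0)) ((a(v:=s, w:=t)) (i,2*m+1)) ((a(v:=s, w:=t)) (i,2*m+2))"
      proof (cases "j = 2*m+1")
        case True
        then show ?thesis using vij po_resp1[where \<sigma>=\<sigma> and c="a(i,0)" and s=s] cv sig s by (simp add: w_def t_def)
      next
        case F: False then have j2: "j = 2*m+2" using jm by simp
        then show ?thesis using vij po_resp1[where \<sigma>=\<sigma> and c="a(i,0)" and s=s] cv sig s F by (simp add: w_def t_def)
      qed
      qed
      then show ?thesis using wun t by blast
    qed
  qed
qed



definition invB :: "bool \<Rightarrow> nat list \<Rightarrow> int \<Rightarrow> (nat\<times>nat \<Rightarrow> int) \<Rightarrow> bool" where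
  "invB par ns \<sigma> a \<longleftrightarrow> valid a \<and> pairs_ok False ns \<sigma> a \<and> spec_ok ns \<sigma> a \<and> (even (card (cset ns a)) = par)"

lemma B_even_center:
  assumes inv: "invB par ns \<sigma> a" and i: "i \<in> cset ns a" and s: "s \<in> {1,-1}"
  shows "invB (\<not> par) ns \<sigma> (a((i,0):=s))"
proof -
  have ic: "i < length ns" "even (ns!i)" "a(i,0) = 0" using i by (auto simp: cset_def)
  have "valid (a((i,0):=s))" using inv s by (auto simp: invB_def intro!: valid_upd)
  moreover have "pairs_ok False ns \<sigma> (a((i,0):=s))"
    using inv ic by (auto simp: invB_def intro!: pairs_center[where a=a and i=i])
  moreover have "spec_ok ns \<sigma> (a((i,0):=s))"
    using inv ic by (auto simp: invB_def intro!: spec_frame[where a=a])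
  moreover have "card (cset ns (a((i,0):=s))) = card (cset ns a) - 1"
    using s by (intro cset_remove[OF i]) auto
  moreover have "card (cset ns a) \<ge> 1" using i finite_cset
    by (metis One_nat_def Suc_leI card_gt_0_iff empty_iff)
  ultimately show ?thesis using inv unfolding invB_def by auto
qed

lemma B_odd_star:
  assumes inv: "invB par ns \<sigma> a" and i: "i < length ns" and o: "odd (ns!i)"
    and z: "a(i,0) = 0" and c: "c \<in> {1,-1}" and sig: "\<sigma> = 1 \<or> \<sigma> = -1"
  shows "invB par ns \<sigma> (a((i,0):=c, (i,ns!i):=\<sigma>*c))"
proof -
  let ?b = "a((i,0):=c, (i,ns!i):=\<sigma>*c)"
  have n0: "ns!i \<noteq> 0" using o using odd_pos by auto
  have "valid ?b" using inv c sig by (auto simp: invB_def intro!: valid_upd)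
  moreover have "pairs_ok False ns \<sigma> ?b"
  proof (rule pairs_center[where a=a and i=i])
    show "pairs_ok False ns \<sigma> a" using inv by (simp add: invB_def)
    show "a(i,0) = 0" by (rule z)
    show "\<forall>i'<length ns. \<forall>m'<ns!i' div 2. ?b(i',2*m'+1) = a(i',2*m'+1) \<and> ?b(i',2*m'+2) = a(i',2*m'+2)"
    proof (intro allI impI)
      fix i' m' assume "i' < length ns" "m' < ns!i' div 2"
      then have "2*m'+2 \<le> ns!i'" by linarith
      then have "(i',2*m'+1) \<noteq> (i,ns!i)" by auto
      moreover have "(i',2*m'+2) \<noteq> (i,ns!i)"
      proof
        assume "(i',2*m'+2) = (i,ns!i)"
        then have "ns!i = 2*(m'+1)" by simp
        then show False using o by simp
      qed
      ultimately have "(i',2*m'+1) \<noteq> (i,ns!i)" "(i',2*m'+2) \<noteq> (i,ns!i)" by blast+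
      then show "?b(i',2*m'+1) = a(i',2*m'+1) \<and> ?b(i',2*m'+2) = a(i',2*m'+2)" by auto
    qed
    show "\<forall>i'. i' \<noteq> i \<longrightarrow> ?b(i',0) = a(i',0)" by auto
  qed
  moreover have "spec_ok ns \<sigma> ?b"
    by (rule spec_upd[where a=a and i=i]) (use inv c n0 in \<open>auto simp: invB_def\<close>)
  moreover have "cset ns ?b = cset ns a"
    by (rule cset_frame) (use o n0 in auto)
  ultimately show ?thesis using inv unfolding invB_def by auto
qed

lemma B_pair:
  assumes "invB par ns \<sigma> a" "i < length ns" "m < ns!i div 2"
    "\<forall>v. v \<noteq> (i,2*m+1) \<and> v \<noteq> (i,2*m+2) \<longrightarrow> b v = a v" "valid b"
    "pair_ok False \<sigma> (b(i,0)) (b(i,2*m+1)) (b(i,2*m+2))"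
  shows "invB par ns \<sigma> b"
proof -
  have "pairs_ok False ns \<sigma> b" using assms pairs_frame[of False ns \<sigma> a i m b] unfolding invB_def by blast
  moreover have "spec_ok ns \<sigma> b"
  proof (rule spec_frame[where a=a])
    show "spec_ok ns \<sigma> a" using assms(1) by (simp add: invB_def)
    show "\<forall>i<length ns. odd (ns!i) \<longrightarrow> b(i,0) = a(i,0) \<and> b(i,ns!i) = a(i,ns!i)"
    proof (intro allI impI)
      fix i' assume "i' < length ns" "odd (ns!i')"
      moreover have "ns!i \<ge> 2*m+2" using assms(3) by linarith
      ultimately have "(i', ns!i') \<noteq> (i,2*m+1)" "(i', ns!i') \<noteq> (i,2*m+2)" by auto
      then show "b(i',0) = a(i',0) \<and> b(i',ns!i') = a(i',ns!i')" using assms(4) by simp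
    qed
  qed
  moreover have "cset ns b = cset ns a" by (rule cset_frame) (use assms(4) in auto)
  ultimately show ?thesis using assms unfolding invB_def by auto
qed



lemma B_odd_step:
  assumes inv: "invB False ns \<sigma> a"
  shows "\<exists>w\<in>sg_unassigned (stars_V ns) a. \<exists>t\<in>{1,-1}. invB True ns \<sigma> (a(w:=t))"
proof -
  have "odd (card (cset ns a))" using inv by (simp add: invB_def)
  then have "card (cset ns a) \<noteq> 0" by (metis even_zero)
  then obtain i where i: "i \<in> cset ns a" by fastforce
  then have "(i,0) \<in> sg_unassigned (stars_V ns) a" by (auto simp: cset_def sg_unassigned_def)
  moreover have "invB True ns \<sigma> (a((i,0):=1))" using B_even_center[OF inv i, of 1] by simp
  ultimately show ?thesis by blast
qed

lemma B_resp:
  assumes inv: "invB True ns \<sigma> a" and sig: "\<sigma> = 1 \<or> \<sigma> = -1"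
    and v: "v \<in> sg_unassigned (stars_V ns) a" and s: "s \<in> {1,-1}"
  shows "invB False ns \<sigma> (a(v:=s)) \<or> (\<exists>w t. w \<in> sg_unassigned (stars_V ns) (a(v:=s)) \<and> t \<in> {1,-1} \<and> invB True ns \<sigma> (a(v:=s, w:=t)))"
proof -
  obtain i j where vij: "v = (i,j)" by fastforce
  have i: "i < length ns" and j: "j \<le> ns!i" and a0: "a(i,j) = 0" using v vij by (auto simp: sg_unassigned_def)
  have val: "valid a" and P0: "pairs_ok False ns \<sigma> a" and S0: "spec_ok ns \<sigma> a"
    using inv by (auto simp: invB_def)
  have st: "\<sigma>*s \<in> {1,-1}" using sig s by auto
  have oddcase: "a(i,0) = 0 \<and> a(i,ns!i) = 0" if o: "odd (ns!i)" and z: "a(i,0) = 0 \<or> a(i,ns!i) = 0"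
  proof -
    have "(a(i,0) = 0 \<and> a(i,ns!i) = 0) \<or> (a(i,0) \<noteq> 0 \<and> a(i,ns!i) = \<sigma>*a(i,0))"
      using S0 i o by (simp add: spec_ok_def)
    then show ?thesis using z sig by auto
  qed
  show ?thesis
  proof (cases "j = 0")
    case True
    then have v0: "v = (i,0)" and ai0: "a(i,0) = 0" using vij a0 by auto
    show ?thesis
    proof (cases "even (ns!i)")
      case True
      then have ic: "i \<in> cset ns a" using i ai0 by (simp add: cset_def)
      have "invB False ns \<sigma> (a((i,0):=s))" using B_even_center[OF inv ic s] by simp
      then show ?thesis unfolding v0 by blast
    next
      case False
      have n0: "ns!i \<noteq> 0"
      proof
        assume "ns!i = 0" with False show False by simp
      qed
      have z: "a(i,ns!i) = 0" using oddcase[OF False] ai0 by blast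
      have "(i,ns!i) \<in> sg_unassigned (stars_V ns) (a(v:=s))" using z n0 i unfolding v0 by (simp add: sg_unassigned_def)
      moreover have "invB True ns \<sigma> (a((i,0):=s, (i,ns!i):=\<sigma>*s))"
        using B_odd_star[OF inv i False ai0 s sig] .
      ultimately show ?thesis using st unfolding v0 by blast
    qed
  next
    case False
    then have j1: "1 \<le> j" by auto
    from leaf_cases[OF j1 j] show ?thesis
    proof
      assume "odd (ns!i) \<and> j = ns!i"
      then have o: "odd (ns!i)" and jn: "j = ns!i" by auto
      have ain: "a(i,ns!i) = 0" using a0 jn by simp
      have z: "a(i,0) = 0" using oddcase[OF o] ain by blast
      have ne: "(i,ns!i) \<noteq> (i,0)" using jn j1 by simp
      have vn: "v = (i,ns!i)" using vij jn by simp
      have un: "(i,0) \<in> sg_unassigned (stars_V ns) (a(v:=s))" using z i ne unfolding vn by (simp add: sg_unassigned_def)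
      have I: "invB True ns \<sigma> (a((i,0):=\<sigma>*s, (i,ns!i):=\<sigma>*(\<sigma>*s)))"
        using B_odd_star[OF inv i o z st sig] .
      have ss: "\<sigma>*(\<sigma>*s) = s" using sig by auto
      have eq: "a(v:=s, (i,0):=\<sigma>*s) = a((i,0):=\<sigma>*s, (i,ns!i):=s)"
        unfolding vn by (rule fun_upd_twist[OF ne])
      have "invB True ns \<sigma> (a(v:=s, (i,0):=\<sigma>*s))" using I unfolding eq ss .
      then show ?thesis using un st by blast
    next
      assume "\<exists>m<ns!i div 2. j = 2*m+1 \<or> j = 2*m+2"
      then obtain m where m: "m < ns!i div 2" and jm: "j = 2*m+1 \<or> j = 2*m+2" by blast
      have P: "pair_ok False \<sigma> (a(i,0)) (a(i,2*m+1)) (a(i,2*m+2))"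
        using P0 i m by (simp add: pairs_ok_def)
      define w where "w = (if j = 2*m+1 then (i,2*m+2) else (i,2*m+1))"
      have wV: "w \<in> stars_V ns" using i m by (auto simp: w_def)
      have cv: "a(i,0) \<in> {-1,0,1}" using val unfolding valid_def by blast
      have aw: "a w = 0"
      proof (cases "j = 2*m+1")
        case True then show ?thesis using P a0 po_zero(1) by (simp add: w_def)
      next
        case False then have "j = 2*m+2" using jm by simp
        then show ?thesis using P a0 po_zero(2) False by (simp add: w_def)
      qed
      define t where "t = (if a(i,0) = 0 then -s else \<sigma> * a(i,0))"
      have t: "t \<in> {1,-1}" using s cv sig by (auto simp: t_def)
      have wun: "w \<in> sg_unassigned (stars_V ns) (a(v:=s))" using aw wV jm vij by (auto simp: sg_unassigned_def w_def)
      have "invB True ns \<sigma> (a(v:=s, w:=t))"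
      proof (rule B_pair[OF inv i m])
        show "\<forall>u. u \<noteq> (i,2*m+1) \<and> u \<noteq> (i,2*m+2) \<longrightarrow> (a(v:=s, w:=t)) u = a u" using jm vij by (auto simp: w_def)
        show "valid (a(v:=s, w:=t))" using val s t by (auto intro!: valid_upd)
        show "pair_ok False \<sigma> ((a(v:=s, w:=t)) (i,0)) ((a(v:=s, w:=t)) (i,2*m+1)) ((a(v:=s, w:=t)) (i,2*m+2))"
        proof (cases "j = 2*m+1")
          case True
          then show ?thesis using vij po_resp1[where \<sigma>=\<sigma> and c="a(i,0)" and s=s] cv sig s by (simp add: w_def t_def)
        next
          case F: False then have j2: "j = 2*m+2" using jm by simp
          then show ?thesis using vij po_resp1[where \<sigma>=\<sigma> and c="a(i,0)" and s=s] cv sig s F by (simp add: w_def t_def)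
        qed
      qed
      then show ?thesis using wun t by blast
    qed
  qed
qed



lemma unassigned_zero: "sg_unassigned V (\<lambda>_. 0) = V"
  by (simp add: sg_unassigned_def)

lemma caseA:
  assumes ev: "\<forall>i<length ns. even (ns!i)" and sig: "\<sigma> = 1 \<or> \<sigma> = -1"
  shows "0 \<le> \<sigma> * sign_game_result (stars_V ns) (stars_E ns) b"
proof -
  define IR where "IR a \<longleftrightarrow> invA ns \<sigma> a \<or> (\<exists>a' v s. invA ns \<sigma> a' \<and> v \<in> sg_unassigned (stars_V ns) a' \<and> s \<in> {1,-1} \<and> a = a'(v:=s))" for a
  have fin: "finite (stars_V ns)" by (rule finite_stars_V)
  have key: "invA ns \<sigma> a \<or> (\<exists>w\<in>sg_unassigned (stars_V ns) a. \<exists>t\<in>{1,-1}. invA ns \<sigma> (a(w:=t)))" if "IR a" for a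
  proof -
    consider "invA ns \<sigma> a" | a' v s where "invA ns \<sigma> a'" "v \<in> sg_unassigned (stars_V ns) a'" "s \<in> {1,-1}" "a = a'(v:=s)"
      using \<open>IR a\<close> unfolding IR_def by blast
    then show ?thesis
    proof cases
      case 1 then show ?thesis by blast
    next
      case 2
      from A_resp[OF 2(1) sig ev 2(2,3)] show ?thesis using 2(4) by blast
    qed
  qed
  have stepR: "\<exists>v\<in>sg_unassigned (stars_V ns) a. \<exists>s\<in>{1,-1}. invA ns \<sigma> (a(v:=s))"
    if "IR a" "sg_unassigned (stars_V ns) a \<noteq> {}" for a
    using key[OF that(1)] A_free[OF _ sig ev that(2)] by blast
  have stepO: "IR (a(v:=s))" if "invA ns \<sigma> a" "v \<in> sg_unassigned (stars_V ns) a" "s \<in> {1,-1}" for a v s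
    using that unfolding IR_def by blast
  have endO: "0 \<le> \<sigma> * sgn (sg_score (stars_E ns) a)" if "invA ns \<sigma> a" "sg_unassigned (stars_V ns) a = {}" for a
  proof -
    have "spec_ok ns \<sigma> a" using ev by (simp add: spec_ok_def)
    then show ?thesis using terminal_sgn(1)[OF _ sig that(2)] that(1) by (auto simp: invA_def)
  qed
  have endR: "0 \<le> \<sigma> * sgn (sg_score (stars_E ns) a)" if "IR a" "sg_unassigned (stars_V ns) a = {}" for a
    using key[OF that(1)] that(2) endO by blast
  have z: "invA ns \<sigma> (\<lambda>_. 0)" by (simp add: invA_def valid_def pairs_ok_def pair_ok_def)
  have S: "card (sg_unassigned (stars_V ns) (\<lambda>_. 0)) \<le> card (stars_V ns)" by (simp add: unassigned_zero)
  note M = strategy[where IR=IR and IO="invA ns \<sigma>" and x=0, OF fin sig stepR stepO endR endO S]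
  have "IR (\<lambda>_. 0)" using z unfolding IR_def by blast
  then have r1: "0 \<le> \<sigma> * sg_val (stars_V ns) (stars_E ns) (card (stars_V ns)) (\<sigma> = 1) (\<lambda>_. 0)"
    using M by blast
  have r2: "0 \<le> \<sigma> * sg_val (stars_V ns) (stars_E ns) (card (stars_V ns)) (\<sigma> \<noteq> 1) (\<lambda>_. 0)"
    using M z by blast
  show ?thesis
  proof (cases "b = (\<sigma> = 1)")
    case True then show ?thesis using r1 unfolding sign_game_result_def by simp
  next
    case False then have "b = (\<sigma> \<noteq> 1)" by blast
    then show ?thesis using r2 unfolding sign_game_result_def by simp
  qed
qed

lemma caseB:
  assumes od: "\<exists>i<length ns. odd (ns!i)" and sig: "\<sigma> = 1 \<or> \<sigma> = -1"
  shows "odd (length (filter even ns)) \<Longrightarrow> 1 \<le> \<sigma> * sign_game_result (stars_V ns) (stars_E ns) (\<sigma> = 1)"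
    and "even (length (filter even ns)) \<Longrightarrow> 1 \<le> \<sigma> * sign_game_result (stars_V ns) (stars_E ns) (\<sigma> \<noteq> 1)"
proof -
  define IR where "IR a \<longleftrightarrow> invB False ns \<sigma> a \<or> (\<exists>a' v s. invB True ns \<sigma> a' \<and> v \<in> sg_unassigned (stars_V ns) a' \<and> s \<in> {1,-1} \<and> a = a'(v:=s))" for a
  have fin: "finite (stars_V ns)" by (rule finite_stars_V)
  have key: "\<exists>w\<in>sg_unassigned (stars_V ns) a. \<exists>t\<in>{1,-1}. invB True ns \<sigma> (a(w:=t))" if "IR a" for a
  proof -
    consider "invB False ns \<sigma> a" | a' v s where "invB True ns \<sigma> a'" "v \<in> sg_unassigned (stars_V ns) a'" "s \<in> {1,-1}" "a = a'(v:=s)"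
      using \<open>IR a\<close> unfolding IR_def by blast
    then show ?thesis
    proof cases
      case 1 then show ?thesis by (rule B_odd_step)
    next
      case 2
      from B_resp[OF 2(1) sig 2(2,3)] show ?thesis
      proof
        assume "invB False ns \<sigma> (a'(v:=s))" then show ?thesis using B_odd_step 2(4) by blast
      next
        assume "\<exists>w t. w \<in> sg_unassigned (stars_V ns) (a'(v:=s)) \<and> t \<in> {1,-1} \<and> invB True ns \<sigma> (a'(v:=s, w:=t))"
        then show ?thesis using 2(4) by blast
      qed
    qed
  qed
  have stepR: "\<exists>v\<in>sg_unassigned (stars_V ns) a. \<exists>s\<in>{1,-1}. invB True ns \<sigma> (a(v:=s))"
    if "IR a" "sg_unassigned (stars_V ns) a \<noteq> {}" for a
    using key[OF that(1)] by blast
  have stepO: "IR (a(v:=s))" if "invB True ns \<sigma> a" "v \<in> sg_unassigned (stars_V ns) a" "s \<in> {1,-1}" for a v s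
    using that unfolding IR_def by blast
  have endO: "1 \<le> \<sigma> * sgn (sg_score (stars_E ns) a)" if "invB True ns \<sigma> a" "sg_unassigned (stars_V ns) a = {}" for a
    using terminal_sgn(2)[OF _ sig that(2) _ _ od] that(1) by (auto simp: invB_def)
  have endR: "1 \<le> \<sigma> * sgn (sg_score (stars_E ns) a)" if "IR a" "sg_unassigned (stars_V ns) a = {}" for a
    using key[OF that(1)] that(2) by blast
  have S: "card (sg_unassigned (stars_V ns) (\<lambda>_. 0)) \<le> card (stars_V ns)" by (simp add: unassigned_zero)
  note M = strategy[where IR=IR and IO="invB True ns \<sigma>" and x=1, OF fin sig stepR stepO endR endO S]
  have cz: "card (cset ns (\<lambda>_. 0)) = length (filter even ns)"
    by (simp add: cset_def length_filter_conv_card)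
  have z: "invB (even (length (filter even ns))) ns \<sigma> (\<lambda>_. 0)"
    unfolding invB_def cz by (simp add: valid_def pairs_ok_def pair_ok_def spec_ok_def)
  show "odd (length (filter even ns)) \<Longrightarrow> 1 \<le> \<sigma> * sign_game_result (stars_V ns) (stars_E ns) (\<sigma> = 1)"
  proof -
    assume "odd (length (filter even ns))"
    then have "IR (\<lambda>_. 0)" using z unfolding IR_def by simp
    then have "1 \<le> \<sigma> * sg_val (stars_V ns) (stars_E ns) (card (stars_V ns)) (\<sigma> = 1) (\<lambda>_. 0)"
      using M by blast
    then show ?thesis unfolding sign_game_result_def .
  qed
  show "even (length (filter even ns)) \<Longrightarrow> 1 \<le> \<sigma> * sign_game_result (stars_V ns) (stars_E ns) (\<sigma> \<noteq> 1)"
  proof -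
    assume "even (length (filter even ns))"
    then have "invB True ns \<sigma> (\<lambda>_. 0)" using z by simp
    then have "1 \<le> \<sigma> * sg_val (stars_V ns) (stars_E ns) (card (stars_V ns)) (\<sigma> \<noteq> 1) (\<lambda>_. 0)"
      using M by blast
    then show ?thesis unfolding sign_game_result_def .
  qed
qed

theorem theorem3:
  fixes ns :: "nat list"
  assumes "ns \<noteq> []" and "\<forall>n\<in>set ns. n \<ge> 1"
  shows "((\<forall>n\<in>set ns. even n) \<longrightarrow>
            (\<forall>b. sign_game_result (stars_V ns) (stars_E ns) b = 0))
       \<and> ((\<exists>n\<in>set ns. odd n) \<and> even (length (filter even ns)) \<longrightarrow>
            sign_game_result (stars_V ns) (stars_E ns) True = -1 \<and>
            sign_game_result (stars_V ns) (stars_E ns) False = 1)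
       \<and> ((\<exists>n\<in>set ns. odd n) \<and> odd (length (filter even ns)) \<longrightarrow>
            sign_game_result (stars_V ns) (stars_E ns) True = 1 \<and>
            sign_game_result (stars_V ns) (stars_E ns) False = -1)"
proof -
  let ?r = "sign_game_result (stars_V ns) (stars_E ns)"
  have bnd: "-1 \<le> ?r b \<and> ?r b \<le> 1" for b
    unfolding sign_game_result_def by (rule sg_val_bounds[OF finite_stars_V])
  have c1: "?r b = 0" if "\<forall>n\<in>set ns. even n" for b
  proof -
    have ev: "\<forall>i<length ns. even (ns!i)" using that by (simp add: all_set_conv_all_nth)
    have x1: "0 \<le> 1 * ?r b" by (rule caseA[OF ev]) simp
    have x2: "0 \<le> (-1) * ?r b" by (rule caseA[OF ev]) simp
    show ?thesis using x1 x2 by linarith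
  qed
  have c23: "\<exists>i<length ns. odd (ns!i)" if h: "\<exists>n\<in>set ns. odd n"
  proof -
    obtain n where n: "n \<in> set ns" "odd n" using h by blast
    then obtain i where "i < length ns" "ns!i = n" by (meson in_set_conv_nth)
    then show ?thesis using n(2) by blast
  qed
  have c2: "?r True = -1 \<and> ?r False = 1"
    if "\<exists>n\<in>set ns. odd n" "even (length (filter even ns))"
  proof -
    have x1: "1 \<le> (-1) * ?r ((-1::int) \<noteq> 1)" by (rule caseB(2)[OF c23[OF that(1)]]) (simp_all add: that(2))
    have x2: "1 \<le> 1 * ?r ((1::int) \<noteq> 1)" by (rule caseB(2)[OF c23[OF that(1)]]) (simp_all add: that(2))
    have "?r True \<le> -1" using x1 by simp
    moreover have "?r False \<ge> 1" using x2 by simp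
    ultimately show ?thesis using bnd[of True] bnd[of False] by linarith
  qed
  have c3: "?r True = 1 \<and> ?r False = -1"
    if "\<exists>n\<in>set ns. odd n" "odd (length (filter even ns))"
  proof -
    have x1: "1 \<le> (-1) * ?r ((-1::int) = 1)" by (rule caseB(1)[OF c23[OF that(1)]]) (simp_all add: that(2))
    have x2: "1 \<le> 1 * ?r ((1::int) = 1)" by (rule caseB(1)[OF c23[OF that(1)]]) (simp_all add: that(2))
    have "?r False \<le> -1" using x1 by simp
    moreover have "?r True \<ge> 1" using x2 by simp
    ultimately show ?thesis using bnd[of True] bnd[of False] by linarith
  qed
  show ?thesis using c1 c2 c3 by blast
qed


end
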